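(* Let $G$ be a group with identity $e$, $A$ a set containing two distinct elements $0$ and $1$, $S \subseteq G$ finite with $e \in S$, and $r \in S \setminus \{e\}$. Let $p \in A^S$ be given by $p(r) = 1$ and $p(s) = 0$ for $s \in S \setminus\{r\}$, and let $\tau : A^G \to A^G$ be the lazy cellular automaton with minimal local map $\mu : A^S \to A$, unique active transition $p$ and writing symbol $\mu(p) = 1$. Then for any $n\geq 2$, $\mathrm{ord}(\tau) > n$ if and only if $r^j\notin S$ for all $2\leq j \leq n$.
   Context: $A^G$ is the set of maps $G \to A$ with shift action $(g\cdot x)(h) := x(hg)$. A cellular automaton is a map $\tau : A^G \to A^G$ with a finite $S \subseteq G$ and $\mu : A^S \to A$ such that $\tau(x)(g) = \mu((g\cdot x)|_S)$; the minimal local map is the local defining map on the neighborhood of smallest cardinality. $\tau$ is lazy with unique active transition $p \in A^S$ and writing symbol $\mu(p)$ if $e \in S$ and for all $z \in A^S$: $\mu(z) = z(e)$ iff $z \neq p$. $\tau^k$ is the $k$-fold composition, $\tau^0$ the identity; $\mathrm{ord}(\tau) := |\{\tau^k : k \in \mathbb{N}\}|$, $\mathbb{N}=\{0,1,\dots\}$. *)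

theory Defs
  imports Main "HOL-Library.FuncSet" "HOL-Library.Extended_Nat"
begin

text \<open>The group G is a type of class group_add (group operation written +,
identity 0, not assumed commutative). Configurations A^G are functions 'g \<Rightarrow> 'a.\<close>

definition shift :: "'g::group_add \<Rightarrow> ('g \<Rightarrow> 'a) \<Rightarrow> ('g \<Rightarrow> 'a)" where
  "shift g x = (\<lambda>h. x (h + g))"

text \<open>Cellular automaton with neighborhood S and local map mu; patterns in A^S are
represented as extensional functions (undefined outside S).\<close>
definition cell_aut :: "'g::group_add set \<Rightarrow> (('g \<Rightarrow> 'a) \<Rightarrow> 'a) \<Rightarrow> ('g \<Rightarrow> 'a) \<Rightarrow> ('g \<Rightarrow> 'a)" where
  "cell_aut S mu x = (\<lambda>g. mu (restrict (shift g x) S))"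

definition lazy_local :: "'g::group_add set \<Rightarrow> (('g \<Rightarrow> 'a) \<Rightarrow> 'a) \<Rightarrow> ('g \<Rightarrow> 'a) \<Rightarrow> bool" where
  "lazy_local S mu p \<longleftrightarrow> 0 \<in> S \<and> p \<in> S \<rightarrow>\<^sub>E UNIV \<and>
     (\<forall>z \<in> S \<rightarrow>\<^sub>E UNIV. mu z = z 0 \<longleftrightarrow> z \<noteq> p)"

definition ca_ord :: "('b \<Rightarrow> 'b) \<Rightarrow> enat" where
  "ca_ord tau = (if finite {tau ^^ k | k. True} then enat (card {tau ^^ k | k. True}) else \<infinity>)"

primrec gpow :: "'g::group_add \<Rightarrow> nat \<Rightarrow> 'g" where
  "gpow r 0 = 0"
| "gpow r (Suc j) = gpow r j + r"

end

theory Submission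
  imports Defs
begin

lemma gpow_comm: "r + gpow r j = gpow r j + r"
  by (induction j) (simp_all add: add.assoc[symmetric])

lemma gpow_add: "gpow r (i + j) = gpow r i + gpow r j"
  by (induction j) (simp_all add: add.assoc)

lemma gpow_add2: "gpow r (i + j) = gpow r j + gpow r i"
  by (metis add.commute gpow_add)

lemma gpow_Suc': "gpow r (Suc j) = r + gpow r j"
  by (simp add: gpow_comm)

lemma gpow_one: "gpow r (Suc 0) = r"
  by simp

lemma gpow_diff: "a \<le> b \<Longrightarrow> s + gpow r a = gpow r b \<Longrightarrow> s = gpow r (b - a)"
  by (metis add_right_cancel gpow_add le_add_diff_inverse2)

lemma gpow_eq: "a < b \<Longrightarrow> gpow r a = gpow r b \<Longrightarrow> gpow r (b - a) = 0"
  by (metis gpow_diff add_0 less_imp_le)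

definition Eset :: "'g::group_add \<Rightarrow> nat \<Rightarrow> nat \<Rightarrow> 'g set" where
  "Eset r n k = {gpow r i | i. n - k \<le> i \<and> i \<le> n}"

locale P3 =
  fixes S :: "'g::group_add set" and r :: 'g
    and zero one :: 'a and mu :: "('g \<Rightarrow> 'a) \<Rightarrow> 'a" and p :: "'g \<Rightarrow> 'a"
  assumes zo: "zero \<noteq> one"
    and fin: "finite S" and S0: "0 \<in> S" and rS: "r \<in> S" and r0: "r \<noteq> 0"
    and p_def: "p = restrict (\<lambda>s. if s = r then one else zero) S"
    and lazy: "lazy_local S mu p" and mup: "mu p = one"
begin

abbreviation "tau \<equiv> cell_aut S mu"

lemma p_r: "p r = one" using rS p_def by simp
lemma p_other: "s \<in> S \<Longrightarrow> s \<noteq> r \<Longrightarrow> p s = zero" using p_def by simp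
lemma p_0: "p 0 = zero" using S0 r0 p_def by simp

lemma tau_eq: "tau y g = (if (\<forall>s\<in>S. y (s+g) = p s) then one else y g)"
proof -
  let ?z = "restrict (shift g y) S"
  have zE: "?z \<in> S \<rightarrow>\<^sub>E UNIV" by simp
  have pE: "p \<in> extensional S" using p_def by simp
  have iff: "?z = p \<longleftrightarrow> (\<forall>s\<in>S. y (s+g) = p s)"
  proof
    assume "?z = p" then show "\<forall>s\<in>S. y (s+g) = p s"
      by (metis restrict_apply' shift_def)
  next
    assume H: "\<forall>s\<in>S. y (s+g) = p s"
    show "?z = p"
    proof
      fix s show "?z s = p s"
        using H pE by (cases "s \<in> S") (auto simp: shift_def extensional_def)
    qed
  qed
  show ?thesis
  proof (cases "?z = p")
    case True
    then show ?thesis using iff mup by (simp add: cell_aut_def)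
  next
    case False
    then have "mu ?z = ?z 0" using lazy zE unfolding lazy_local_def by blast
    moreover have "\<not> (\<forall>s\<in>S. y (s+g) = p s)" using False iff by blast
    ultimately show ?thesis using S0 by (auto simp: cell_aut_def shift_def)
  qed
qed

lemma tau_cases: "tau y g = y g \<or> tau y g = one"
  using tau_eq by auto

lemma tau_one: "y g = one \<Longrightarrow> tau y g = one"
  using tau_eq by auto

lemma persist: "(tau^^t') x g = one" if "(tau^^t) x g = one" "t \<le> t'"
  using that
proof (induction t')
  case 0 then show ?case by simp
next
  case (Suc m) then show ?case using tau_one by (cases "t \<le> m") (auto simp: le_Suc_eq)
qed


lemma changed: "(tau^^t') x g = one" if "t \<le> t'" "(tau^^t) x g \<noteq> (tau^^t') x g"
  using that
proof (induction t')
  case 0 then show ?case by simp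
next
  case (Suc m)
  show ?case
  proof (cases "t \<le> m")
    case True
    show ?thesis
    proof (cases "(tau^^m) x g = (tau^^t) x g")
      case True
      then have "(tau^^Suc m) x g \<noteq> (tau^^m) x g" using Suc.prems by metis
      then show ?thesis using tau_cases[of "(tau^^m) x" g] by simp
    next
      case False
      then have "(tau^^m) x g = one" using Suc.IH True by metis
      then show ?thesis using tau_one by simp
    qed
  next
    case False
    then have "t = Suc m" using Suc.prems by simp
    then show ?thesis using Suc.prems by simp
  qed
qed

lemma backzero: "(tau^^t) x g = zero" if "t \<le> t'" "(tau^^t') x g = zero"
  using changed[OF that(1), of x g] that(2) zo by metis

lemma flip_info: "\<forall>s\<in>S. (tau^^t) x (s+g) = p s" if "(tau^^Suc t) x g \<noteq> (tau^^t) x g"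
  using that tau_eq[of "(tau^^t) x" g] by (auto split: if_splits)

lemma flip_back: "(tau^^Suc t) x (r+h) \<noteq> (tau^^t) x (r+h)"
  if A: "(tau^^Suc (Suc t)) x h \<noteq> (tau^^Suc t) x h"
proof
  assume B: "(tau^^Suc t) x (r+h) = (tau^^t) x (r+h)"
  have M: "\<forall>s\<in>S. (tau^^Suc t) x (s+h) = p s" using flip_info[OF A] .
  have "\<forall>s\<in>S. (tau^^t) x (s+h) = p s"
  proof
    fix s assume s: "s \<in> S"
    show "(tau^^t) x (s+h) = p s"
    proof (cases "s = r")
      case True then show ?thesis using B M rS by simp
    next
      case False
      then have "(tau^^Suc t) x (s+h) = zero" using M s p_other by simp
      then show ?thesis using backzero[of t "Suc t"] s False p_other by simp
    qed
  qed
  then have "(tau^^Suc t) x h = one" using tau_eq[of "(tau^^t) x" h] by simp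
  moreover have "(tau^^Suc t) x (0+h) = zero" using M S0 p_0 by blast
  ultimately show False using zo by simp
qed

lemma chain: "(tau^^Suc t) x (gpow r i + g) \<noteq> (tau^^t) x (gpow r i + g)"
  if "(tau^^Suc (t+i)) x g \<noteq> (tau^^(t+i)) x g"
  using that
proof (induction i arbitrary: t)
  case 0 then show ?case by simp
next
  case (Suc i)
  have "(tau^^Suc (Suc t)) x (gpow r i + g) \<noteq> (tau^^Suc t) x (gpow r i + g)"
    using Suc.IH[of "Suc t"] Suc.prems by simp
  from flip_back[OF this]
  show ?case by (simp add: add.assoc[symmetric] gpow_comm)
qed

lemma no_flip: "(tau^^j) x g = (tau^^(j-1)) x g"
  if j2: "2 \<le> j" and jS: "gpow r j \<in> S" and jmin: "\<forall>j'. 2 \<le> j' \<and> j' < j \<longrightarrow> gpow r j' \<notin> S"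
proof (rule ccontr)
  assume C: "(tau^^j) x g \<noteq> (tau^^(j-1)) x g"
  define t where "t = j - 1"
  have jt: "j = Suc t" using j2 t_def by simp
  have rjr: "gpow r j \<noteq> r"
  proof
    assume "gpow r j = r"
    then have "gpow r t + r = 0 + r" using jt by simp
    then have t0: "gpow r t = 0" using add_right_cancel by blast
    show False
    proof (cases "t = 1")
      case True then show False using t0 r0 by simp
    next
      case False
      then have "2 \<le> t" "t < j" using j2 jt by auto
      then show False using jmin t0 S0 by metis
    qed
  qed
  have F: "(tau^^Suc t) x g \<noteq> (tau^^t) x g" using C jt by simp
  have "(tau^^t) x (gpow r j + g) = zero"
    using flip_info[OF F] jS rjr p_other by simp
  moreover have "(tau^^Suc 0) x (gpow r t + g) \<noteq> (tau^^0) x (gpow r t + g)"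
    using chain[of 0 t x g] F by simp
  then have "(tau^^0) x (r + (gpow r t + g)) = one"
    using flip_info[of 0 x "gpow r t + g"] rS p_r by simp
  then have "(tau^^t) x (r + (gpow r t + g)) = one" using persist by blast
  then have "(tau^^t) x (gpow r j + g) = one"
    using jt by (simp add: add.assoc[symmetric] gpow_comm)
  ultimately show False using zo by simp
qed


lemma nonzero: "gpow r d \<noteq> 0"
  if H: "\<forall>j. 2 \<le> j \<and> j \<le> n \<longrightarrow> gpow r j \<notin> S" and "1 \<le> d" "d \<le> n"
proof (cases "d = 1")
  case True then show ?thesis using r0 by simp
next
  case False then show ?thesis using H that S0 by (metis One_nat_def Suc_1 Suc_leI le_neq_implies_less)
qed

lemma state_step: "tau (\<lambda>g. if g \<in> Eset r n k then one else zero) =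
    (\<lambda>g. if g \<in> Eset r n (Suc k) then one else zero)"
  if H: "\<forall>j. 2 \<le> j \<and> j \<le> n \<longrightarrow> gpow r j \<notin> S" and kn: "k < n"
proof
  fix g
  define y where "y = (\<lambda>g. if g \<in> Eset r n k then one else zero)"
  define c where "c = gpow r (n - Suc k)"
  show "tau y g = (if g \<in> Eset r n (Suc k) then one else zero)"
  proof (cases "g = c")
    case True
    have "\<forall>s\<in>S. y (s + c) = p s"
    proof
      fix s assume sS: "s \<in> S"
      show "y (s + c) = p s"
      proof (cases "s = r")
        case True
        have "r + c = gpow r (n - k)" unfolding c_def using kn
          by (metis Suc_diff_Suc gpow_Suc')
        then have "r + c \<in> Eset r n k" unfolding Eset_def using kn by auto
        then show ?thesis using True p_r y_def by simp
      next
        case False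
        have "s + c \<notin> Eset r n k"
        proof
          assume "s + c \<in> Eset r n k"
          then obtain i where i: "s + c = gpow r i" "n - k \<le> i" "i \<le> n" unfolding Eset_def by auto
          then have "s = gpow r (i - (n - Suc k))" using gpow_diff[of "n - Suc k" i s r] c_def by simp
          moreover have "1 \<le> i - (n - Suc k)" "i - (n - Suc k) \<le> n" using i kn by auto
          ultimately show False using False sS H
            by (metis One_nat_def Suc_1 Suc_leI gpow_one le_neq_implies_less)
        qed
        then show ?thesis using y_def p_other sS False by simp
      qed
    qed
    then have "tau y c = one" using tau_eq[of y c] by simp
    moreover have "c \<in> Eset r n (Suc k)" unfolding Eset_def c_def using kn by auto
    ultimately show ?thesis using True by simp
  next
    case False
    have nm: "\<not> (\<forall>s\<in>S. y (s + g) = p s)"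
    proof
      assume M: "\<forall>s\<in>S. y (s + g) = p s"
      then have "y (r + g) = one" using rS p_r by simp
      then have "r + g \<in> Eset r n k" using y_def zo by (auto split: if_splits)
      then obtain i where i: "r + g = gpow r i" "n - k \<le> i" "i \<le> n" unfolding Eset_def by auto
      then obtain i' where i': "i = Suc i'" using kn by (cases i) auto
      then have "r + g = r + gpow r i'" using i gpow_Suc' by metis
      then have gi: "g = gpow r i'" by simp
      then have "i' \<noteq> n - Suc k" using False c_def by metis
      then have "g \<in> Eset r n k" unfolding Eset_def using gi i i' by auto
      then have "y (0 + g) = one" using y_def by simp
      then show False using M S0 p_0 zo by metis
    qed
    then have "tau y g = y g" using tau_eq[of y g] by auto
    moreover have "g \<in> Eset r n k \<longleftrightarrow> g \<in> Eset r n (Suc k)"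
    proof
      assume "g \<in> Eset r n k" then show "g \<in> Eset r n (Suc k)" unfolding Eset_def by auto
    next
      assume "g \<in> Eset r n (Suc k)"
      then obtain i where i: "g = gpow r i" "n - Suc k \<le> i" "i \<le> n" unfolding Eset_def by auto
      then have "i \<noteq> n - Suc k" using False c_def by auto
      then show "g \<in> Eset r n k" unfolding Eset_def using i by auto
    qed
    ultimately show ?thesis using y_def by simp
  qed
qed

lemma state: "(tau^^k) (\<lambda>g. if g \<in> Eset r n 0 then one else zero) =
    (\<lambda>g. if g \<in> Eset r n k then one else zero)"
  if H: "\<forall>j. 2 \<le> j \<and> j \<le> n \<longrightarrow> gpow r j \<notin> S" and kn: "k \<le> n"
  using kn
proof (induction k)
  case 0 then show ?case by simp
next
  case (Suc k) then show ?case using state_step[OF H] by simp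
qed

lemma distinct_pows: "tau^^a \<noteq> tau^^b"
  if H: "\<forall>j. 2 \<le> j \<and> j \<le> n \<longrightarrow> gpow r j \<notin> S" and ab: "a < b" "b \<le> n"
proof
  assume E: "tau^^a = tau^^b"
  define x where "x = (\<lambda>g. if g \<in> Eset r n 0 then one else zero)"
  have "(tau^^a) x = (tau^^b) x" using E by simp
  then have EQ: "(\<lambda>g. if g \<in> Eset r n a then one else zero) = (\<lambda>g. if g \<in> Eset r n b then one else zero)"
    using state[OF H] ab x_def by simp
  have cb: "gpow r (n - b) \<in> Eset r n b" unfolding Eset_def by auto
  have "gpow r (n - b) \<notin> Eset r n a"
  proof
    assume "gpow r (n - b) \<in> Eset r n a"
    then obtain i where i: "gpow r (n - b) = gpow r i" "n - a \<le> i" "i \<le> n" unfolding Eset_def by auto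
    then have "gpow r (i - (n - b)) = 0" using gpow_eq[of "n - b" i r] ab by simp
    moreover have "1 \<le> i - (n - b)" "i - (n - b) \<le> n" using i ab by auto
    ultimately show False using nonzero[OF H] by blast
  qed
  then show False using EQ cb zo by (metis (mono_tags))
qed

lemma pows_eventually: "tau^^k \<in> (\<lambda>i. tau^^i) ` {..<j}"
  if j2: "2 \<le> j" and jS: "gpow r j \<in> S" and jmin: "\<forall>j'. 2 \<le> j' \<and> j' < j \<longrightarrow> gpow r j' \<notin> S"
proof -
  have J: "tau^^j = tau^^(j-1)" using no_flip[OF that] by auto
  have M: "tau^^(m + (j-1)) = tau^^(j-1)" for m
  proof (induction m)
    case 0 then show ?case by simp
  next
    case (Suc m)
    have "tau^^(Suc m + (j-1)) = tau^^(m + j)" using j2 by simp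
    also have "\<dots> = (tau^^m) \<circ> (tau^^j)" by (simp add: funpow_add)
    also have "\<dots> = (tau^^m) \<circ> (tau^^(j-1))" using J by simp
    also have "\<dots> = tau^^(m + (j-1))" by (simp add: funpow_add)
    finally show ?case using Suc.IH by simp
  qed
  show ?thesis
  proof (cases "k < j")
    case True then show ?thesis by auto
  next
    case False
    then have "tau^^k = tau^^(j-1)" using M[of "k - (j-1)"] by simp
    then show ?thesis using j2 by auto
  qed
qed

end

theorem proposition3:
  fixes S :: "'g::group_add set" and r :: 'g
    and zero one :: 'a and mu :: "('g \<Rightarrow> 'a) \<Rightarrow> 'a" and p :: "'g \<Rightarrow> 'a"
    and n :: nat
  assumes "zero \<noteq> one"
    and "finite S" and "0 \<in> S" and "r \<in> S" and "r \<noteq> 0"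
    and "p = restrict (\<lambda>s. if s = r then one else zero) S"
    and "lazy_local S mu p" and "mu p = one"
    and "n \<ge> 2"
  shows "ca_ord (cell_aut S mu) > enat n \<longleftrightarrow> (\<forall>j. 2 \<le> j \<and> j \<le> n \<longrightarrow> gpow r j \<notin> S)"
proof -
  interpret P3 S r zero one mu p using assms by unfold_locales
  let ?T = "{cell_aut S mu ^^ k | k. True}"
  show ?thesis
  proof
    assume O: "ca_ord (cell_aut S mu) > enat n"
    show "\<forall>j. 2 \<le> j \<and> j \<le> n \<longrightarrow> gpow r j \<notin> S"
    proof (rule ccontr)
      assume "\<not> ?thesis"
      then have ex: "\<exists>j. 2 \<le> j \<and> gpow r j \<in> S \<and> j \<le> n" by auto
      define j where "j = (LEAST j. 2 \<le> j \<and> gpow r j \<in> S \<and> j \<le> n)"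
      have jP: "2 \<le> j \<and> gpow r j \<in> S \<and> j \<le> n" using LeastI_ex[OF ex] j_def by simp
      have jmin: "\<forall>j'. 2 \<le> j' \<and> j' < j \<longrightarrow> gpow r j' \<notin> S"
        using not_less_Least j_def jP by fastforce
      have sub: "?T \<subseteq> (\<lambda>i. cell_aut S mu ^^ i) ` {..<j}"
        using pows_eventually[of j] jP jmin by blast
      have finT: "finite ?T" using finite_subset[OF sub] by blast
      have "card ?T \<le> card ((\<lambda>i. cell_aut S mu ^^ i) ` {..<j})"
        using card_mono[OF _ sub] by blast
      also have "\<dots> \<le> j" using card_image_le[of "{..<j}"] by simp
      finally have "card ?T \<le> n" using jP by simp
      then show False using O finT unfolding ca_ord_def by simp
    qed
  next
    assume H: "\<forall>j. 2 \<le> j \<and> j \<le> n \<longrightarrow> gpow r j \<notin> S"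
    have inj: "inj_on (\<lambda>i. cell_aut S mu ^^ i) {..n}"
    proof (rule inj_onI)
      fix a b assume "a \<in> {..n}" "b \<in> {..n}" and eq: "cell_aut S mu ^^ a = cell_aut S mu ^^ b"
      show "a = b"
      proof (rule ccontr)
        assume "a \<noteq> b"
        then consider "a < b" | "b < a" by linarith
        then show False
          using distinct_pows[OF H, of a b] distinct_pows[OF H, of b a] eq \<open>a \<in> {..n}\<close> \<open>b \<in> {..n}\<close>
          by (cases) auto
      qed
    qed
    have sub: "(\<lambda>i. cell_aut S mu ^^ i) ` {..n} \<subseteq> ?T" by blast
    show "ca_ord (cell_aut S mu) > enat n"
    proof (cases "finite ?T")
      case True
      have "card ((\<lambda>i. cell_aut S mu ^^ i) ` {..n}) \<le> card ?T" using card_mono[OF True sub] .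
      then have "Suc n \<le> card ?T" using card_image[OF inj] by simp
      then show ?thesis using True unfolding ca_ord_def by simp
    next
      case False then show ?thesis unfolding ca_ord_def by simp
    qed
  qed
qed

end
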